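(* Assume (A1) with $\Omega\supseteq B(x^*,\delta)$, (A2), (A3), (A4) with exponent $r\in(0,1]$. Let $c_1>0$ be such that $\|d_k\|\le c_1\operatorname{dist}(x_k,X^* )$. Consider one pure LMMSS step with $\lambda_k=\|J_k^TF_k\|^r$ and $x_{k+1}=x_k+d_k$. Let $\eta\in(0,1)$, $L_5=L_0L_2(1+c_1)(2+c_1)$, $L_7=L_4c_1^2+L_5+L_3^r\|L\|^2c_1$, $\hat C=L_7+(1+(1+c_1)^{1+r})C$. If $x_k,x_{k+1}\in B(x^*,\delta/2)$ and $\operatorname{dist}(x_k,X^* )<\varepsilon$ with $\varepsilon\le(\eta\omega/\hat C)^{1/r}$, then $\operatorname{dist}(x_{k+1},X^* )\le\eta\operatorname{dist}(x_k,X^* )$.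
   Context: Let $F:\mathbb{R}^n\to\mathbb{R}^m$ be twice continuously differentiable with $m\ge n$, $J(x)$ its Jacobian, $\phi(x)=\tfrac12\|F(x)\|^2$, $\nabla\phi(x)=J(x)^TF(x)$. Norms are Euclidean/spectral. $X^*=\{x: J(x)^TF(x)=0\}\neq\emptyset$; $\operatorname{dist}(x,X^* )=\inf_{z\in X^*}\|x-z\|$, and $\bar x$ denotes a point of $X^*$ with $\|x-\bar x\|=\operatorname{dist}(x,X^* )$. Fix $x^*\in X^*$; $B(x^*,\delta)$ is the closed ball. $L\in\mathbb{R}^{p\times n}$ has rank $p\le n$. $F_k=F(x_k)$, $J_k=J(x_k)$; the LMMSS direction $d_k$ solves $(J_k^TJ_k+\lambda_kL^TL)d_k=-J_k^TF_k$. (A1) there are $\Omega$ and $\gamma>0$ with $\|J(x)v\|^2+\|Lv\|^2\ge\gamma\|v\|^2$ for $x\in\Omega$, all $v$. (A2) $\delta\in(0,1)$, $L_0>0$ with $\|J(x)-J(y)\|\le L_0\|x-y\|$ on $B(x^*,\delta)$. (A3) $\omega>0$ with $\omega\operatorname{dist}(x,X^* )\le\|J(x)^TF(x)\|$ on $B(x^*,\delta)$. (A4) $r\in(0,1]$, $C\ge0$ with $\|(J(x)-J(z))^TF(z)\|\le C\|x-z\|^{1+r}$ for $x\in B(x^*,\delta)$, $z\in X^*\cap B(x^*,\delta)$. Constants: $L_2=\max_{B(x^*,\delta)}\|J\|$, $\beta=\max_{B(x^*,\delta)}\|F\|$, $L_3=L_2^2+\beta L_0$; $L_4>0$ is a constant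 such that $\|\nabla\phi(y)-\nabla\phi(x)-J(x)^TJ(x)(y-x)\|\le L_4\|x-y\|^2+\|(J(x)-J(y))^TF(y)\|$ for all $x,y\in B(x^*,\delta)$. *)

theory Defs
  imports "HOL-Analysis.Analysis"
begin

definition specnorm :: "real^'n^'m \<Rightarrow> real" where
  "specnorm A = onorm (\<lambda>v. A *v v)"

definition C2_with_jacobian :: "(real^'n \<Rightarrow> real^'m) \<Rightarrow> (real^'n \<Rightarrow> real^'n^'m) \<Rightarrow> bool" where
  "C2_with_jacobian F J \<longleftrightarrow>
     (\<forall>x. (F has_derivative (\<lambda>h. J x *v h)) (at x)) \<and>
     (\<exists>J'::real^'n \<Rightarrow> ((real^'n) \<Rightarrow>\<^sub>L (real^'n^'m)).
        (\<forall>x. (J has_derivative blinfun_apply (J' x)) (at x)) \<and> continuous_on UNIV J')"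

text \<open>Gradient of phi = 1/2 |F|^2, i.e. J(x)^T F(x).\<close>
definition grad_phi :: "(real^'n \<Rightarrow> real^'m) \<Rightarrow> (real^'n \<Rightarrow> real^'n^'m) \<Rightarrow> real^'n \<Rightarrow> real^'n" where
  "grad_phi F J x = transpose (J x) *v F x"

definition stationary_set :: "(real^'n \<Rightarrow> real^'m) \<Rightarrow> (real^'n \<Rightarrow> real^'n^'m) \<Rightarrow> (real^'n) set" where
  "stationary_set F J = {x. grad_phi F J x = 0}"

end

theory Submission
  imports Defs
begin

lemma sn_nonneg: "specnorm (A::real^'n^'m) \<ge> 0"
  unfolding specnorm_def by (simp add: onorm_pos_le)

lemma sn_mul: "norm ((A::real^'n^'m) *v v) \<le> specnorm A * norm v"
  unfolding specnorm_def by (rule onorm) simp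

lemma sn_tmul: "norm (transpose (A::real^'n^'m) *v v) \<le> specnorm A * norm v"
proof -
  let ?w = "transpose A *v v"
  have "(norm ?w)\<^sup>2 = inner ?w ?w" by (simp add: power2_norm_eq_inner)
  also have "\<dots> = inner v (A *v ?w)"
    by (simp add: dot_lmul_matrix)
  also have "\<dots> \<le> norm v * norm (A *v ?w)" by (rule norm_cauchy_schwarz)
  also have "\<dots> \<le> norm v * (specnorm A * norm ?w)"
    by (rule mult_left_mono[OF sn_mul]) simp
  finally have h: "(norm ?w)\<^sup>2 \<le> specnorm A * norm v * norm ?w" by (simp add: ac_simps)
  show ?thesis
  proof (cases "norm ?w = 0")
    case True then show ?thesis using sn_nonneg[of A] by simp
  next
    case False
    then have "norm ?w > 0" by simp
    with h show ?thesis by (simp add: power2_eq_square)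
  qed
qed

lemma sn_le_sum: "specnorm (A::real^'n^'m) \<le> (\<Sum>i\<in>UNIV. \<Sum>j\<in>UNIV. \<bar>A $ i $ j\<bar>)"
  unfolding specnorm_def by (rule onorm_le_matrix_component_sum)

lemma tdiff: "transpose (A - B) = transpose A - (transpose B :: 'a::ab_group_add^_^_)"
  by (simp add: transpose_def vec_eq_iff)

lemma smul_mv: "((c::real) *\<^sub>R M) *v v = c *\<^sub>R (M *v (v::real^_))"
  by (simp add: vec_eq_iff matrix_vector_mult_def sum_distrib_left mult.assoc)

theorem mainTheorem8:
  fixes F :: "real^'n \<Rightarrow> real^'m" and J :: "real^'n \<Rightarrow> real^'n^'m"
    and Lm :: "real^'n^'p" and xs xk xk1 d :: "real^'n"
    and lam \<gamma> \<delta> L0 \<omega> r C L4 c1 \<eta> \<epsilon> :: real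
  defines "Xs \<equiv> stationary_set F J"
  defines "L2 \<equiv> (SUP x\<in>cball xs \<delta>. specnorm (J x))"
  defines "\<beta> \<equiv> (SUP x\<in>cball xs \<delta>. norm (F x))"
  defines "L3 \<equiv> L2\<^sup>2 + \<beta> * L0"
  defines "lam \<equiv> norm (grad_phi F J xk) powr r"
  defines "L5 \<equiv> L0 * L2 * (1 + c1) * (2 + c1)"
  defines "L7 \<equiv> L4 * c1\<^sup>2 + L5 + L3 powr r * (specnorm Lm)\<^sup>2 * c1"
  defines "Chat \<equiv> L7 + (1 + (1 + c1) powr (1 + r)) * C"
  assumes C2: "C2_with_jacobian F J"
    and mn: "CARD('n) \<le> CARD('m)"
    and rankL: "rank Lm = CARD('p)" and pn: "CARD('p) \<le> CARD('n)"
    and Xs_ne: "Xs \<noteq> {}" and xs_in: "xs \<in> Xs"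
    \<comment> \<open>(A1) with Omega containing B(x*,delta)\<close>
    and A1: "\<gamma> > 0" "\<And>x v. x \<in> cball xs \<delta> \<Longrightarrow> (norm (J x *v v))\<^sup>2 + (norm (Lm *v v))\<^sup>2 \<ge> \<gamma> * (norm v)\<^sup>2"
    \<comment> \<open>(A2)\<close>
    and A2: "0 < \<delta>" "\<delta> < 1" "L0 > 0"
      "\<And>x y. x \<in> cball xs \<delta> \<Longrightarrow> y \<in> cball xs \<delta> \<Longrightarrow> specnorm (J x - J y) \<le> L0 * norm (x - y)"
    \<comment> \<open>(A3)\<close>
    and A3: "\<omega> > 0" "\<And>x. x \<in> cball xs \<delta> \<Longrightarrow> \<omega> * infdist x Xs \<le> norm (grad_phi F J x)"
    \<comment> \<open>(A4)\<close>
    and A4: "0 < r" "r \<le> 1" "C \<ge> 0"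
      "\<And>x z. x \<in> cball xs \<delta> \<Longrightarrow> z \<in> Xs \<inter> cball xs \<delta> \<Longrightarrow>
         norm (transpose (J x - J z) *v F z) \<le> C * norm (x - z) powr (1 + r)"
    \<comment> \<open>the constant L4\<close>
    and L4: "L4 > 0"
      "\<And>x y. x \<in> cball xs \<delta> \<Longrightarrow> y \<in> cball xs \<delta> \<Longrightarrow>
         norm (grad_phi F J y - grad_phi F J x - (transpose (J x) ** J x) *v (y - x))
           \<le> L4 * (norm (x - y))\<^sup>2 + norm (transpose (J x - J y) *v F y)"
    \<comment> \<open>the LMMSS step\<close>
    and step: "(transpose (J xk) ** J xk + lam *\<^sub>R (transpose Lm ** Lm)) *v d = - grad_phi F J xk"
    and xk1_def: "xk1 = xk + d"
    and c1: "c1 > 0" "norm d \<le> c1 * infdist xk Xs"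
    and eta: "0 < \<eta>" "\<eta> < 1"
    and balls: "xk \<in> cball xs (\<delta>/2)" "xk1 \<in> cball xs (\<delta>/2)"
    and close: "infdist xk Xs < \<epsilon>" "\<epsilon> \<le> (\<eta> * \<omega> / Chat) powr (1 / r)"
  shows "infdist xk1 Xs \<le> \<eta> * infdist xk Xs"
proof -
  let ?g = "grad_phi F J"
  define D where "D = infdist xk Xs"
  have D0: "D \<ge> 0" unfolding D_def by (rule infdist_nonneg)
  show ?thesis
  proof (cases "D = 0")
    case True
    then have "norm d \<le> 0" using c1 D_def by simp
    then have "d = 0" by simp
    then show ?thesis using xk1_def True D_def by simp
  next
    case False
    then have Dpos: "D > 0" using D0 by simp
    have derF: "\<And>x. (F has_derivative (\<lambda>h. J x *v h)) (at x)"
      using C2 unfolding C2_with_jacobian_def by blast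
    obtain J' :: "real^'n \<Rightarrow> ((real^'n) \<Rightarrow>\<^sub>L (real^'n^'m))" where
      derJ: "\<And>x. (J has_derivative blinfun_apply (J' x)) (at x)"
      using C2 unfolding C2_with_jacobian_def by blast
    have contF: "continuous_on UNIV F"
      by (meson continuous_at_imp_continuous_on derF has_derivative_continuous)
    have contJ: "continuous_on UNIV J"
      by (meson continuous_at_imp_continuous_on derJ has_derivative_continuous)
    have contg: "continuous_on UNIV ?g"
      unfolding grad_phi_def transpose_matrix_vector
      apply (simp add: vector_matrix_mult_def)
      apply (intro continuous_intros)
      using contF contJ by (auto intro!: continuous_intros)
    have clXs: "closed Xs"
      unfolding Xs_def stationary_set_def
      by (rule closed_Collect_eq[OF contg continuous_on_const])
    obtain xb where xb: "xb \<in> Xs" "D = dist xk xb"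
      using infdist_attains_inf[OF clXs Xs_ne, of xk] D_def by metis
    have gxb: "?g xb = 0" using xb(1) unfolding Xs_def stationary_set_def by simp
    have Dle: "D \<le> dist xk xs" unfolding D_def by (rule infdist_le[OF xs_in])
    have xkB: "xk \<in> cball xs \<delta>" "xk1 \<in> cball xs \<delta>" "xs \<in> cball xs \<delta>"
      using balls A2 by (auto simp: dist_commute)
    have Dhalf: "D \<le> \<delta>/2" using Dle balls(1) by (simp add: dist_commute)
    have D1: "D \<le> 1" using Dhalf A2 by simp
    have xbB: "xb \<in> cball xs \<delta>"
    proof -
      have "dist xs xb \<le> dist xs xk + dist xk xb" by (rule dist_triangle)
      then show ?thesis using xb(2) Dhalf balls(1) by simp
    qed
    have nxb: "norm (xk - xb) = D" using xb(2) by (simp add: dist_norm)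
    have bddJ: "bdd_above ((\<lambda>x. specnorm (J x)) ` cball xs \<delta>)"
    proof -
      let ?s = "\<lambda>x. (\<Sum>i\<in>UNIV. \<Sum>j\<in>UNIV. \<bar>J x $ i $ j\<bar>)"
      have "continuous_on (cball xs \<delta>) ?s"
        using contJ by (auto intro!: continuous_intros intro: continuous_on_subset)
      then have "compact (?s ` cball xs \<delta>)" by (rule compact_continuous_image) simp
      then have "bdd_above (?s ` cball xs \<delta>)"
        by (meson bounded_imp_bdd_above compact_imp_bounded)
      then obtain M where "\<forall>x\<in>cball xs \<delta>. ?s x \<le> M"
        by (auto simp: bdd_above_def)
      then show ?thesis
        by (intro bdd_aboveI2[of _ _ M]) (use sn_le_sum order_trans in fastforce)
    qed
    have L2b: "\<And>x. x \<in> cball xs \<delta> \<Longrightarrow> specnorm (J x) \<le> L2"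
      unfolding L2_def by (rule cSUP_upper[OF _ bddJ])
    have bddF: "bdd_above ((\<lambda>x. norm (F x)) ` cball xs \<delta>)"
    proof -
      have "continuous_on (cball xs \<delta>) (\<lambda>x. norm (F x))"
        using contF by (auto intro!: continuous_intros intro: continuous_on_subset)
      then have "compact ((\<lambda>x. norm (F x)) ` cball xs \<delta>)" by (rule compact_continuous_image) simp
      then show ?thesis by (meson bounded_imp_bdd_above compact_imp_bounded)
    qed
    have betab: "\<And>x. x \<in> cball xs \<delta> \<Longrightarrow> norm (F x) \<le> \<beta>"
      unfolding \<beta>_def by (rule cSUP_upper[OF _ bddF])
    have L2pos: "L2 \<ge> 0" using L2b[OF xkB(3)] sn_nonneg[of "J xs"] by linarith
    have betapos: "\<beta> \<ge> 0" using betab[OF xkB(3)] norm_ge_zero[of "F xs"] by linarith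
    have L3pos: "L3 \<ge> 0" unfolding L3_def using betapos A2(3) by simp
    have Flip: "\<And>x y. x \<in> cball xs \<delta> \<Longrightarrow> y \<in> cball xs \<delta> \<Longrightarrow> norm (F x - F y) \<le> L2 * norm (x - y)"
    proof -
      fix x y assume x: "x \<in> cball xs \<delta>" and y: "y \<in> cball xs \<delta>"
      show "norm (F x - F y) \<le> L2 * norm (x - y)"
      proof (rule differentiable_bound[where f' = "\<lambda>x h. J x *v h" and S = "cball xs \<delta>"])
        show "convex (cball xs \<delta>)" by simp
        show "\<And>x. x \<in> cball xs \<delta> \<Longrightarrow> (F has_derivative (\<lambda>h. J x *v h)) (at x within cball xs \<delta>)"
          using derF has_derivative_at_withinI by blast
        show "\<And>x. x \<in> cball xs \<delta> \<Longrightarrow> onorm (\<lambda>h. J x *v h) \<le> L2"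
          using L2b unfolding specnorm_def by blast
      qed (use x y in auto)
    qed
    have gk: "norm (?g xk) \<le> L3 * D"
    proof -
      have eq: "?g xk = transpose (J xk) *v (F xk - F xb) + transpose (J xk - J xb) *v F xb"
        using gxb unfolding grad_phi_def
        by (simp del: transpose_matrix_vector add: tdiff matrix_vector_mult_diff_rdistrib
            matrix_vector_mult_diff_distrib)
      have "norm (?g xk) \<le> norm (transpose (J xk) *v (F xk - F xb)) + norm (transpose (J xk - J xb) *v F xb)"
        unfolding eq by (rule norm_triangle_ineq)
      also have "\<dots> \<le> specnorm (J xk) * norm (F xk - F xb) + specnorm (J xk - J xb) * norm (F xb)"
        by (intro add_mono sn_tmul)
      also have "\<dots> \<le> L2 * (L2 * D) + (L0 * D) * \<beta>"
      proof (intro add_mono mult_mono)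
        show "specnorm (J xk) \<le> L2" by (rule L2b[OF xkB(1)])
        show "norm (F xk - F xb) \<le> L2 * D" using Flip[OF xkB(1) xbB] nxb by simp
        show "specnorm (J xk - J xb) \<le> L0 * D" using A2(4)[OF xkB(1) xbB] nxb by simp
        show "norm (F xb) \<le> \<beta>" by (rule betab[OF xbB])
      qed (use L2pos A2 D0 sn_nonneg in auto)
      also have "\<dots> = L3 * D" unfolding L3_def by (simp add: algebra_simps power2_eq_square)
      finally show ?thesis .
    qed
    have lam0: "lam \<ge> 0" unfolding lam_def by simp
    have lamb: "lam \<le> L3 powr r * D powr r"
    proof -
      have "lam \<le> (L3 * D) powr r" unfolding lam_def
        by (rule powr_mono2) (use A4 gk in auto)
      also have "\<dots> = L3 powr r * D powr r" by (rule powr_mult)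
      finally show ?thesis .
    qed
    have nd: "norm d \<le> c1 * D" using c1 D_def by simp
    have n1: "norm (xk1 - xb) \<le> (1 + c1) * D"
    proof -
      have "norm (xk1 - xb) = norm ((xk - xb) + d)" using xk1_def by (simp add: algebra_simps)
      also have "\<dots> \<le> norm (xk - xb) + norm d" by (rule norm_triangle_ineq)
      finally show ?thesis using nxb nd by (simp add: algebra_simps)
    qed
    have ident: "?g xk1 = (?g xk1 - ?g xk - (transpose (J xk) ** J xk) *v (xk1 - xk))
                        - lam *\<^sub>R (transpose Lm *v (Lm *v d))"
    proof -
      have "(transpose (J xk) ** J xk) *v d + lam *\<^sub>R (transpose Lm *v (Lm *v d)) = - ?g xk"
        using step by (simp del: transpose_matrix_vector add: matrix_vector_mult_add_rdistrib smul_mv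
            matrix_vector_mul_assoc)
      then show ?thesis using xk1_def by (simp add: algebra_simps)
    qed
    have t1: "norm (?g xk1 - ?g xk - (transpose (J xk) ** J xk) *v (xk1 - xk))
        \<le> L4 * (norm d)\<^sup>2 + norm (transpose (J xk - J xk1) *v F xk1)"
      using L4(2)[OF xkB(1) xkB(2)] xk1_def by (simp del: transpose_matrix_vector add: norm_minus_commute)
    have t2: "norm (lam *\<^sub>R (transpose Lm *v (Lm *v d))) \<le> lam * (specnorm Lm * (specnorm Lm * norm d))"
    proof -
      have "norm (transpose Lm *v (Lm *v d)) \<le> specnorm Lm * norm (Lm *v d)" by (rule sn_tmul)
      also have "\<dots> \<le> specnorm Lm * (specnorm Lm * norm d)"
        by (rule mult_left_mono[OF sn_mul sn_nonneg])
      finally show ?thesis using lam0 by (simp add: mult_left_mono)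
    qed
    define P where "P = D powr (1 + r)"
    have P0: "P \<ge> 0" unfolding P_def by simp
    have D2P: "D\<^sup>2 \<le> P"
    proof -
      have "D powr 2 \<le> D powr (1 + r)" by (rule powr_mono') (use A4 D0 D1 in auto)
      then show ?thesis unfolding P_def using D0 by simp
    qed
    have DrP: "D powr r * D = P" unfolding P_def using Dpos
      by (simp add: powr_add)
    have t3: "norm (transpose (J xk - J xk1) *v F xk1)
        \<le> C * P + C * ((1 + c1) powr (1 + r) * P) + L0 * (c1 * D) * (L2 * ((1 + c1) * D))"
    proof -
      have eq: "transpose (J xk - J xk1) *v F xk1 = transpose (J xk - J xb) *v F xb
          - transpose (J xk1 - J xb) *v F xb + transpose (J xk - J xk1) *v (F xk1 - F xb)"
        by (simp del: transpose_matrix_vector add: tdiff matrix_vector_mult_diff_rdistrib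
            matrix_vector_mult_diff_distrib algebra_simps)
      have "norm (transpose (J xk - J xk1) *v F xk1) \<le> norm (transpose (J xk - J xb) *v F xb)
          + norm (transpose (J xk1 - J xb) *v F xb) + norm (transpose (J xk - J xk1) *v (F xk1 - F xb))"
        unfolding eq by (smt (verit) norm_triangle_ineq norm_triangle_ineq4)
      also have "\<dots> \<le> C * P + C * ((1 + c1) powr (1 + r) * P) + L0 * (c1 * D) * (L2 * ((1 + c1) * D))"
      proof (intro add_mono)
        show "norm (transpose (J xk - J xb) *v F xb) \<le> C * P"
          using A4(4)[OF xkB(1), of xb] xb(1) xbB nxb unfolding P_def by simp
        have "norm (transpose (J xk1 - J xb) *v F xb) \<le> C * norm (xk1 - xb) powr (1 + r)"
          using A4(4)[OF xkB(2), of xb] xb(1) xbB by simp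
        also have "\<dots> \<le> C * ((1 + c1) * D) powr (1 + r)"
          by (intro mult_left_mono powr_mono2) (use A4 n1 in auto)
        also have "\<dots> = C * ((1 + c1) powr (1 + r) * P)"
          unfolding P_def using c1 D0 by (simp add: powr_mult)
        finally show "norm (transpose (J xk1 - J xb) *v F xb) \<le> C * ((1 + c1) powr (1 + r) * P)" .
        have "norm (transpose (J xk - J xk1) *v (F xk1 - F xb)) \<le> specnorm (J xk - J xk1) * norm (F xk1 - F xb)"
          by (rule sn_tmul)
        also have "\<dots> \<le> L0 * (c1 * D) * (L2 * ((1 + c1) * D))"
        proof (intro mult_mono)
          have "specnorm (J xk - J xk1) \<le> L0 * norm (xk - xk1)" by (rule A2(4)[OF xkB(1) xkB(2)])
          also have "norm (xk - xk1) = norm d" using xk1_def by simp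
          finally show "specnorm (J xk - J xk1) \<le> L0 * (c1 * D)"
            using nd A2(3) by (smt (verit) mult_left_mono)
          show "norm (F xk1 - F xb) \<le> L2 * ((1 + c1) * D)"
            using Flip[OF xkB(2) xbB] n1 L2pos by (smt (verit) mult_left_mono)
        qed (use sn_nonneg L2pos c1 D0 A2 in auto)
        finally show "norm (transpose (J xk - J xk1) *v (F xk1 - F xb)) \<le> L0 * (c1 * D) * (L2 * ((1 + c1) * D))" .
      qed
      finally show ?thesis .
    qed
    have Cpos: "Chat > 0"
    proof -
      have "L4 * c1\<^sup>2 > 0" using L4 c1 by simp
      moreover have "L5 \<ge> 0" unfolding L5_def using A2 L2pos c1 by simp
      moreover have "L3 powr r * (specnorm Lm)\<^sup>2 * c1 \<ge> 0" using c1 by simp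
      moreover have "(1 + (1 + c1) powr (1 + r)) * C \<ge> 0" using A4 by simp
      ultimately show ?thesis unfolding Chat_def L7_def by linarith
    qed
    have gk1: "norm (?g xk1) \<le> Chat * P"
    proof -
      have "norm (?g xk1) \<le> L4 * (norm d)\<^sup>2 + norm (transpose (J xk - J xk1) *v F xk1)
          + lam * (specnorm Lm * (specnorm Lm * norm d))"
        using t1 t2 ident by (smt (verit) norm_triangle_ineq4)
      also have "\<dots> \<le> L4 * (c1\<^sup>2 * D\<^sup>2) + (C * P + C * ((1 + c1) powr (1 + r) * P) + L0 * (c1 * D) * (L2 * ((1 + c1) * D)))
          + (L3 powr r * D powr r) * (specnorm Lm * (specnorm Lm * (c1 * D)))"
      proof (intro add_mono t3 mult_mono mult_left_mono)
        have "(norm d)\<^sup>2 \<le> (c1 * D)\<^sup>2" by (rule power_mono[OF nd]) simp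
        then show "(norm d)\<^sup>2 \<le> c1\<^sup>2 * D\<^sup>2" by (simp add: power_mult_distrib)
      qed (use L4(1) lamb nd sn_nonneg[of Lm] lam0 in auto)
      also have "\<dots> = (L4 * c1\<^sup>2 + L0 * L2 * c1 * (1 + c1)) * D\<^sup>2
          + ((1 + (1 + c1) powr (1 + r)) * C + L3 powr r * (specnorm Lm)\<^sup>2 * c1) * P"
        using DrP[symmetric] by (simp add: algebra_simps power2_eq_square)
      also have "\<dots> \<le> (L4 * c1\<^sup>2 + L0 * L2 * c1 * (1 + c1)) * P
          + ((1 + (1 + c1) powr (1 + r)) * C + L3 powr r * (specnorm Lm)\<^sup>2 * c1) * P"
        by (intro add_mono mult_left_mono D2P) (use L4 A2 L2pos c1 A4 in auto)
      also have "\<dots> \<le> Chat * P"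
      proof -
        have "L0 * L2 * c1 * (1 + c1) \<le> L5" unfolding L5_def
          using A2 L2pos c1 by (simp add: mult_left_mono mult_right_mono)
        then have "(L4 * c1\<^sup>2 + L0 * L2 * c1 * (1 + c1)) + ((1 + (1 + c1) powr (1 + r)) * C + L3 powr r * (specnorm Lm)\<^sup>2 * c1) \<le> Chat"
          unfolding Chat_def L7_def by linarith
        then show ?thesis using P0 by (metis distrib_right mult_right_mono)
      qed
      finally show ?thesis .
    qed
    have "\<omega> * infdist xk1 Xs \<le> Chat * P" using A3(2)[OF xkB(2)] gk1 by linarith
    also have "\<dots> = (Chat * D powr r) * D" using DrP by simp
    also have "\<dots> \<le> (\<eta> * \<omega>) * D"
    proof (intro mult_right_mono D0)
      have "D powr r \<le> \<epsilon> powr r" by (rule powr_mono2) (use A4 D0 close D_def in auto)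
      also have "\<dots> \<le> ((\<eta> * \<omega> / Chat) powr (1 / r)) powr r"
        by (rule powr_mono2) (use A4 D0 close D_def in auto)
      also have "\<dots> = \<eta> * \<omega> / Chat" using A4 eta A3 Cpos by (simp add: powr_powr)
      finally show "Chat * D powr r \<le> \<eta> * \<omega>" using Cpos by (simp add: field_simps)
    qed
    finally have "\<omega> * infdist xk1 Xs \<le> \<omega> * (\<eta> * D)" by (simp add: ac_simps)
    then show ?thesis using A3(1) D_def by simp
  qed
qed
end
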